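(* Let $(D,\prec_\perp,\succ_\perp,\prec_\vdash,\prec_\dashv,\succ_\vdash,\succ_\dashv,\alpha)$ be a Hom-six-dendriform algebra. Define $x\perp y=x\prec_\perp y+x\succ_\perp y$, $x\vdash y=x\prec_\vdash y+x\succ_\vdash y$, $x\dashv y=x\prec_\dashv y+x\succ_\dashv y$ for all $x,y\in D$. Then $(D,\perp,\vdash,\dashv,\alpha)$ is a Hom-triassociative algebra.
   Context: All vector spaces are over a field of characteristic zero. A Hom-dendriform algebra is $(D,\prec,\succ,\alpha)$ with $\prec,\succ$ bilinear on $D$ and $\alpha$ linear such that for all $x,y,z$: $\alpha(x)\prec(y\prec z+y\succ z)=(x\prec y)\prec\alpha(z)$; $\alpha(x)\succ(y\prec z)=(x\succ y)\prec\alpha(z)$; $\alpha(x)\succ(y\succ z)=(x\prec y+x\succ y)\succ\alpha(z)$. A Hom-quadri-dendriform algebra is $(D,\prec_\vdash,\prec_\dashv,\succ_\vdash,\succ_\dashv,\alpha)$ with four bilinear operations and $\alpha$ linear such that for all $x,y,z$: (Q1) $(x\prec_\vdash y)\prec_\vdash\alpha(z)=(x\prec_\dashv y)\prec_\vdash\alpha(z)=\alpha(x)\prec_\vdash(y\prec_\vdash z+y\succ_\vdash z)$; (Q2) $(x\succ_\vdash y)\prec_\vdash\alpha(z)=(x\succ_\dashv y)\prec_\vdash\alpha(z)=\alpha(x)\succ_\vdash(y\prec_\vdash z)$; (Q3) $\alpha(x)\succ_\vdash(y\succ_\vdash z)=(x\prec_\vdash y+x\succ_\vdash y)\succ_\vdash\alpha(z)=(x\prec_\dashv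 y+x\succ_\dashv y)\succ_\vdash\alpha(z)$; (Q4) $\alpha(x)\succ_\vdash(y\succ_\vdash z)=(x\prec_\dashv y+x\succ_\vdash y)\succ_\vdash\alpha(z)=(x\prec_\vdash y+x\succ_\dashv y)\succ_\vdash\alpha(z)$; (Q5) $(x\prec_\vdash y)\prec_\dashv\alpha(z)=\alpha(x)\prec_\vdash(y\prec_\dashv z+y\succ_\dashv z)$; (Q6) $(x\succ_\vdash y)\prec_\dashv\alpha(z)=\alpha(x)\succ_\vdash(y\prec_\dashv z)$; (Q7) $\alpha(x)\succ_\vdash(y\succ_\dashv z)=(x\prec_\vdash y+x\succ_\vdash y)\succ_\dashv\alpha(z)$; (Q8) $(x\prec_\dashv y)\prec_\dashv\alpha(z)=\alpha(x)\prec_\dashv(y\prec_\vdash z+y\succ_\vdash z)=\alpha(x)\prec_\dashv(y\prec_\dashv z+y\succ_\dashv z)$; (Q9) $(x\prec_\dashv y)\prec_\dashv\alpha(z)=\alpha(x)\prec_\dashv(y\prec_\vdash z+y\succ_\dashv z)=\alpha(x)\prec_\dashv(y\prec_\dashv z+y\succ_\vdash z)$; (Q10) $(x\succ_\dashv y)\prec_\dashv\alpha(z)=\alpha(x)\succ_\dashv(y\prec_\vdash z)=\alpha(x)\succ_\dashv(y\prec_\dashv z)$; (Q11) $\alpha(x)\succ_\dashv(y\succ_\vdash z)=\alpha(x)\succ_\dashv(y\succ_\dashv z)=(x\prec_\dashv y+x\succ_\dashv y)\succ_\dashv\alpha(z)$. A Hom-six-dendriform algebra is a tuple $(D,\prec_\perp,\succ_\perp,\prec_\vdash,\prec_\dashv,\succ_\vdash,\succ_\dashv,\alpha)$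 such that $(D,\prec_\perp,\succ_\perp,\alpha)$ is a Hom-dendriform algebra, $(D,\prec_\vdash,\prec_\dashv,\succ_\vdash,\succ_\dashv,\alpha)$ is a Hom-quadri-dendriform algebra, and for all $x,y,z\in D$: (S1) $(x\prec_\vdash y)\prec_\perp\alpha(z)=\alpha(x)\prec_\vdash(y\prec_\perp z+y\succ_\perp z)$; (S2) $(x\succ_\vdash y)\prec_\perp\alpha(z)=\alpha(x)\succ_\vdash(y\prec_\perp z)$; (S3) $\alpha(x)\succ_\vdash(y\succ_\perp z)=(x\prec_\vdash y+x\succ_\vdash y)\succ_\perp\alpha(z)$; (S4) $(x\prec_\dashv y)\prec_\perp\alpha(z)=\alpha(x)\prec_\perp(y\prec_\vdash z+y\succ_\vdash z)$; (S5) $(x\succ_\dashv y)\prec_\perp\alpha(z)=\alpha(x)\succ_\perp(y\prec_\vdash z)$; (S6) $\alpha(x)\succ_\perp(y\succ_\vdash z)=(x\prec_\dashv y+x\succ_\dashv y)\succ_\perp\alpha(z)$; (S7) $(x\prec_\perp y)\prec_\dashv\alpha(z)=\alpha(x)\prec_\perp(y\prec_\dashv z+y\succ_\dashv z)$; (S8) $(x\succ_\perp y)\prec_\dashv\alpha(z)=\alpha(x)\succ_\perp(y\prec_\dashv z)$; (S9) $\alpha(x)\succ_\perp(y\succ_\dashv z)=(x\prec_\perp y+x\succ_\perp y)\succ_\dashv\alpha(z)$; (S10) $(x\prec_\perp y)\prec_\vdash\alpha(z)=(x\prec_\vdash y)\prec_\vdash\alpha(z)=(x\prec_\dashv y)\prec_\vdash\alpha(z)$;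 (S11) $(x\succ_\perp y)\prec_\vdash\alpha(z)=(x\succ_\vdash y)\prec_\vdash\alpha(z)=(x\succ_\dashv y)\prec_\vdash\alpha(z)$; (S12) $(x\prec_\perp y)\succ_\vdash\alpha(z)=(x\prec_\vdash y)\succ_\vdash\alpha(z)=(x\prec_\dashv y)\succ_\vdash\alpha(z)$; (S13) $(x\succ_\perp y)\succ_\vdash\alpha(z)=(x\succ_\vdash y)\succ_\vdash\alpha(z)=(x\succ_\dashv y)\succ_\vdash\alpha(z)$; (S14) $\alpha(x)\prec_\dashv(y\prec_\perp z)=\alpha(x)\prec_\dashv(y\prec_\vdash z)=\alpha(x)\prec_\dashv(y\prec_\dashv z)$; (S15) $\alpha(x)\succ_\dashv(y\prec_\perp z)=\alpha(x)\succ_\dashv(y\prec_\vdash z)=\alpha(x)\succ_\dashv(y\prec_\dashv z)$; (S16) $\alpha(x)\succ_\dashv(y\succ_\perp z)=\alpha(x)\succ_\dashv(y\succ_\vdash z)=\alpha(x)\succ_\dashv(y\succ_\dashv z)$; (S17) $\alpha(x)\prec_\dashv(y\succ_\perp z)=\alpha(x)\prec_\dashv(y\succ_\vdash z)=\alpha(x)\prec_\dashv(y\succ_\dashv z)$. A Hom-triassociative algebra is $(D,\perp,\vdash,\dashv,\alpha)$ with three bilinear operations and $\alpha$ linear such that: $(D,\vdash,\dashv,\alpha)$ is Hom-diassociative, i.e. $(x\dashv y)\dashv\alpha(z)=\alpha(x)\dashv(y\dashv z)$, $(x\dashv y)\dashv\alpha(z)=\alpha(x)\dashv(y\vdash z)$,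 $(x\vdash y)\dashv\alpha(z)=\alpha(x)\vdash(y\dashv z)$, $(x\dashv y)\vdash\alpha(z)=\alpha(x)\vdash(y\vdash z)$, $(x\vdash y)\vdash\alpha(z)=\alpha(x)\vdash(y\vdash z)$; $(D,\perp,\alpha)$ is Hom-associative, i.e. $(x\perp y)\perp\alpha(z)=\alpha(x)\perp(y\perp z)$; and for all $x,y,z$: $(x\dashv y)\dashv\alpha(z)=\alpha(x)\dashv(y\perp z)$; $(x\vdash y)\perp\alpha(z)=\alpha(x)\vdash(y\perp z)$; $(x\perp y)\dashv\alpha(z)=\alpha(x)\perp(y\dashv z)$; $(x\perp y)\vdash\alpha(z)=\alpha(x)\vdash(y\vdash z)$; $(x\dashv y)\perp\alpha(z)=\alpha(x)\perp(y\vdash z)$. *)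

theory Defs
  imports Main "HOL.Vector_Spaces"
begin

definition bilin :: "('k::field \<Rightarrow> 'v::ab_group_add \<Rightarrow> 'v) \<Rightarrow> ('v \<Rightarrow> 'v \<Rightarrow> 'v) \<Rightarrow> bool" where
  "bilin s m \<longleftrightarrow> (\<forall>x. Vector_Spaces.linear s s (m x)) \<and> (\<forall>y. Vector_Spaces.linear s s (\<lambda>x. m x y))"

definition hom_dendriform ::
  "('k::field \<Rightarrow> 'v::ab_group_add \<Rightarrow> 'v) \<Rightarrow> ('v \<Rightarrow> 'v \<Rightarrow> 'v) \<Rightarrow> ('v \<Rightarrow> 'v \<Rightarrow> 'v) \<Rightarrow> ('v \<Rightarrow> 'v) \<Rightarrow> bool" where
  "hom_dendriform s l r a \<longleftrightarrow> bilin s l \<and> bilin s r \<and> Vector_Spaces.linear s s a \<and>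
    (\<forall>x y z.
      l (a x) (l y z + r y z) = l (l x y) (a z) \<and>
      r (a x) (l y z) = l (r x y) (a z) \<and>
      r (a x) (r y z) = r (l x y + r x y) (a z))"

(* Arguments: lv = prec_vdash, ld = prec_dashv, rv = succ_vdash, rd = succ_dashv *)
definition hom_quadri_dendriform ::
  "('k::field \<Rightarrow> 'v::ab_group_add \<Rightarrow> 'v) \<Rightarrow> ('v \<Rightarrow> 'v \<Rightarrow> 'v) \<Rightarrow> ('v \<Rightarrow> 'v \<Rightarrow> 'v) \<Rightarrow>
   ('v \<Rightarrow> 'v \<Rightarrow> 'v) \<Rightarrow> ('v \<Rightarrow> 'v \<Rightarrow> 'v) \<Rightarrow> ('v \<Rightarrow> 'v) \<Rightarrow> bool" where
  "hom_quadri_dendriform s lv ld rv rd a \<longleftrightarrow>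
    bilin s lv \<and> bilin s ld \<and> bilin s rv \<and> bilin s rd \<and> Vector_Spaces.linear s s a \<and>
    (\<forall>x y z.
      \<comment> \<open>Q1\<close>
      lv (lv x y) (a z) = lv (ld x y) (a z) \<and> lv (ld x y) (a z) = lv (a x) (lv y z + rv y z) \<and>
      \<comment> \<open>Q2\<close>
      lv (rv x y) (a z) = lv (rd x y) (a z) \<and> lv (rd x y) (a z) = rv (a x) (lv y z) \<and>
      \<comment> \<open>Q3\<close>
      rv (a x) (rv y z) = rv (lv x y + rv x y) (a z) \<and> rv (lv x y + rv x y) (a z) = rv (ld x y + rd x y) (a z) \<and>
      \<comment> \<open>Q4\<close>
      rv (a x) (rv y z) = rv (ld x y + rv x y) (a z) \<and> rv (ld x y + rv x y) (a z) = rv (lv x y + rd x y) (a z) \<and>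
      \<comment> \<open>Q5\<close>
      ld (lv x y) (a z) = lv (a x) (ld y z + rd y z) \<and>
      \<comment> \<open>Q6\<close>
      ld (rv x y) (a z) = rv (a x) (ld y z) \<and>
      \<comment> \<open>Q7\<close>
      rv (a x) (rd y z) = rd (lv x y + rv x y) (a z) \<and>
      \<comment> \<open>Q8\<close>
      ld (ld x y) (a z) = ld (a x) (lv y z + rv y z) \<and> ld (a x) (lv y z + rv y z) = ld (a x) (ld y z + rd y z) \<and>
      \<comment> \<open>Q9\<close>
      ld (ld x y) (a z) = ld (a x) (lv y z + rd y z) \<and> ld (a x) (lv y z + rd y z) = ld (a x) (ld y z + rv y z) \<and>
      \<comment> \<open>Q10\<close>
      ld (rd x y) (a z) = rd (a x) (lv y z) \<and> rd (a x) (lv y z) = rd (a x) (ld y z) \<and>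
      \<comment> \<open>Q11\<close>
      rd (a x) (rv y z) = rd (a x) (rd y z) \<and> rd (a x) (rd y z) = rd (ld x y + rd x y) (a z))"

(* Arguments: lp = prec_perp, rp = succ_perp, then lv, ld, rv, rd as above *)
definition hom_six_dendriform ::
  "('k::field \<Rightarrow> 'v::ab_group_add \<Rightarrow> 'v) \<Rightarrow> ('v \<Rightarrow> 'v \<Rightarrow> 'v) \<Rightarrow> ('v \<Rightarrow> 'v \<Rightarrow> 'v) \<Rightarrow>
   ('v \<Rightarrow> 'v \<Rightarrow> 'v) \<Rightarrow> ('v \<Rightarrow> 'v \<Rightarrow> 'v) \<Rightarrow> ('v \<Rightarrow> 'v \<Rightarrow> 'v) \<Rightarrow> ('v \<Rightarrow> 'v \<Rightarrow> 'v) \<Rightarrow>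
   ('v \<Rightarrow> 'v) \<Rightarrow> bool" where
  "hom_six_dendriform s lp rp lv ld rv rd a \<longleftrightarrow>
    hom_dendriform s lp rp a \<and> hom_quadri_dendriform s lv ld rv rd a \<and>
    (\<forall>x y z.
      \<comment> \<open>S1\<close> lp (lv x y) (a z) = lv (a x) (lp y z + rp y z) \<and>
      \<comment> \<open>S2\<close> lp (rv x y) (a z) = rv (a x) (lp y z) \<and>
      \<comment> \<open>S3\<close> rv (a x) (rp y z) = rp (lv x y + rv x y) (a z) \<and>
      \<comment> \<open>S4\<close> lp (ld x y) (a z) = lp (a x) (lv y z + rv y z) \<and>
      \<comment> \<open>S5\<close> lp (rd x y) (a z) = rp (a x) (lv y z) \<and>
      \<comment> \<open>S6\<close> rp (a x) (rv y z) = rp (ld x y + rd x y) (a z) \<and>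
      \<comment> \<open>S7\<close> ld (lp x y) (a z) = lp (a x) (ld y z + rd y z) \<and>
      \<comment> \<open>S8\<close> ld (rp x y) (a z) = rp (a x) (ld y z) \<and>
      \<comment> \<open>S9\<close> rp (a x) (rd y z) = rd (lp x y + rp x y) (a z) \<and>
      \<comment> \<open>S10\<close> lv (lp x y) (a z) = lv (lv x y) (a z) \<and> lv (lv x y) (a z) = lv (ld x y) (a z) \<and>
      \<comment> \<open>S11\<close> lv (rp x y) (a z) = lv (rv x y) (a z) \<and> lv (rv x y) (a z) = lv (rd x y) (a z) \<and>
      \<comment> \<open>S12\<close> rv (lp x y) (a z) = rv (lv x y) (a z) \<and> rv (lv x y) (a z) = rv (ld x y) (a z) \<and>
      \<comment> \<open>S13\<close> rv (rp x y) (a z) = rv (rv x y) (a z) \<and> rv (rv x y) (a z) = rv (rd x y) (a z) \<and>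
      \<comment> \<open>S14\<close> ld (a x) (lp y z) = ld (a x) (lv y z) \<and> ld (a x) (lv y z) = ld (a x) (ld y z) \<and>
      \<comment> \<open>S15\<close> rd (a x) (lp y z) = rd (a x) (lv y z) \<and> rd (a x) (lv y z) = rd (a x) (ld y z) \<and>
      \<comment> \<open>S16\<close> rd (a x) (rp y z) = rd (a x) (rv y z) \<and> rd (a x) (rv y z) = rd (a x) (rd y z) \<and>
      \<comment> \<open>S17\<close> ld (a x) (rp y z) = ld (a x) (rv y z) \<and> ld (a x) (rv y z) = ld (a x) (rd y z))"

(* Hom-triassociative algebra: p = perp, v = vdash, d = dashv *)
definition hom_triassociative ::
  "('k::field \<Rightarrow> 'v::ab_group_add \<Rightarrow> 'v) \<Rightarrow> ('v \<Rightarrow> 'v \<Rightarrow> 'v) \<Rightarrow> ('v \<Rightarrow> 'v \<Rightarrow> 'v) \<Rightarrow>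
   ('v \<Rightarrow> 'v \<Rightarrow> 'v) \<Rightarrow> ('v \<Rightarrow> 'v) \<Rightarrow> bool" where
  "hom_triassociative s p v d a \<longleftrightarrow>
    bilin s p \<and> bilin s v \<and> bilin s d \<and> Vector_Spaces.linear s s a \<and>
    (\<forall>x y z.
      d (d x y) (a z) = d (a x) (d y z) \<and>
      d (d x y) (a z) = d (a x) (v y z) \<and>
      d (v x y) (a z) = v (a x) (d y z) \<and>
      v (d x y) (a z) = v (a x) (v y z) \<and>
      v (v x y) (a z) = v (a x) (v y z) \<and>
      p (p x y) (a z) = p (a x) (p y z) \<and>
      d (d x y) (a z) = d (a x) (p y z) \<and>
      p (v x y) (a z) = v (a x) (p y z) \<and>
      d (p x y) (a z) = p (a x) (d y z) \<and>
      v (p x y) (a z) = v (a x) (v y z) \<and>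
      p (d x y) (a z) = p (a x) (v y z))"

end

theory Submission
  imports Defs
begin

lemma bilin_add:
  assumes vs: "vector_space s" and "bilin s m" and "bilin s n"
  shows "bilin s (\<lambda>x y. m x y + n x y)"
  using assms unfolding bilin_def linear_iff
  by (auto simp: module.scale_right_distrib[OF vs[unfolded module_iff_vector_space[symmetric]]] algebra_simps)

lemma bilin_addL: "bilin s m \<Longrightarrow> m (x + y) z = m x z + m y z"
  unfolding bilin_def linear_iff by auto

lemma bilin_addR: "bilin s m \<Longrightarrow> m z (x + y) = m z x + m z y"
  unfolding bilin_def linear_iff by auto

theorem proposition4p7:
  fixes s :: "'k::field_char_0 \<Rightarrow> 'v::ab_group_add \<Rightarrow> 'v"
    and lp rp lv ld rv rd :: "'v \<Rightarrow> 'v \<Rightarrow> 'v" and a :: "'v \<Rightarrow> 'v"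
  assumes "vector_space s"
    and "hom_six_dendriform s lp rp lv ld rv rd a"
  shows "hom_triassociative s (\<lambda>x y. lp x y + rp x y) (\<lambda>x y. lv x y + rv x y)
           (\<lambda>x y. ld x y + rd x y) a"
proof -
  note H = assms(2)[unfolded hom_six_dendriform_def hom_dendriform_def hom_quadri_dendriform_def]
  have B: "bilin s lp" "bilin s rp" "bilin s lv" "bilin s ld" "bilin s rv" "bilin s rd"
    and La: "Vector_Spaces.linear s s a" using H by auto
  note ex = bilin_addL[OF B(1)] bilin_addL[OF B(2)] bilin_addL[OF B(3)] bilin_addL[OF B(4)]
    bilin_addL[OF B(5)] bilin_addL[OF B(6)] bilin_addR[OF B(1)] bilin_addR[OF B(2)]
    bilin_addR[OF B(3)] bilin_addR[OF B(4)] bilin_addR[OF B(5)] bilin_addR[OF B(6)]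
  note H' = H[unfolded ex]
  define p where "p = (\<lambda>x y. lp x y + rp x y)"
  define v where "v = (\<lambda>x y. lv x y + rv x y)"
  define d where "d = (\<lambda>x y. ld x y + rd x y)"
  have main: "d (d x y) (a z) = d (a x) (d y z) \<and>
      d (d x y) (a z) = d (a x) (v y z) \<and>
      d (v x y) (a z) = v (a x) (d y z) \<and>
      v (d x y) (a z) = v (a x) (v y z) \<and>
      v (v x y) (a z) = v (a x) (v y z) \<and>
      p (p x y) (a z) = p (a x) (p y z) \<and>
      d (d x y) (a z) = d (a x) (p y z) \<and>
      p (v x y) (a z) = v (a x) (p y z) \<and>
      d (p x y) (a z) = p (a x) (d y z) \<and>
      v (p x y) (a z) = v (a x) (v y z) \<and>
      p (d x y) (a z) = p (a x) (v y z)" for x y z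
  proof -
    have e0: "ld (ld x y) (a z) = ld (a x) (ld y z) + ld (a x) (rd y z)" using H' by metis
    have e1: "ld (a x) (lp y z) = ld (a x) (ld y z)" using H' by metis
    have e2: "ld (a x) (lv y z) = ld (a x) (ld y z)" using H' by metis
    have e3: "ld (a x) (rp y z) = ld (a x) (rd y z)" using H' by metis
    have e4: "ld (a x) (rv y z) = ld (a x) (rd y z)" using H' by metis
    have e5: "rd (a x) (lp y z) = rd (a x) (ld y z)" using H' by metis
    have e6: "rd (a x) (lv y z) = rd (a x) (ld y z)" using H' by metis
    have e7: "rd (a x) (rp y z) = rd (a x) (rd y z)" using H' by metis
    have e8: "rd (a x) (rv y z) = rd (a x) (rd y z)" using H' by metis
    have e9: "ld (rd x y) (a z) = rd (a x) (ld y z)" using H' by metis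
    have e10: "rd (a x) (rd y z) = rd (ld x y) (a z) + rd (rd x y) (a z)" using H' by metis
    have e11: "ld (lv x y) (a z) = lv (a x) (ld y z) + lv (a x) (rd y z)" using H' by metis
    have e12: "ld (rv x y) (a z) = rv (a x) (ld y z)" using H' by metis
    have e13: "rv (a x) (rd y z) = rd (lv x y) (a z) + rd (rv x y) (a z)" using H' by metis
    have e14: "lv (lp x y) (a z) = lv (ld x y) (a z)" using H' by metis
    have e15: "lv (lv x y) (a z) = lv (ld x y) (a z)" using H' by metis
    have e16: "lv (rp x y) (a z) = lv (rd x y) (a z)" using H' by metis
    have e17: "lv (rv x y) (a z) = lv (rd x y) (a z)" using H' by metis
    have e18: "rv (lp x y) (a z) = rv (ld x y) (a z)" using H' by metis
    have e19: "rv (lv x y) (a z) = rv (ld x y) (a z)" using H' by metis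
    have e20: "rv (rp x y) (a z) = rv (rd x y) (a z)" using H' by metis
    have e21: "rv (rv x y) (a z) = rv (rd x y) (a z)" using H' by metis
    have e22: "lv (ld x y) (a z) = lv (a x) (lv y z) + lv (a x) (rv y z)" using H' by metis
    have e23: "lv (rd x y) (a z) = rv (a x) (lv y z)" using H' by metis
    have e24: "rv (a x) (rv y z) = rv (ld x y) (a z) + rv (rd x y) (a z)" using H' by metis
    have e25: "lp (lp x y) (a z) = lp (a x) (lp y z) + lp (a x) (rp y z)" using H' by metis
    have e26: "lp (rp x y) (a z) = rp (a x) (lp y z)" using H' by metis
    have e27: "rp (a x) (rp y z) = rp (lp x y) (a z) + rp (rp x y) (a z)" using H' by metis
    have e28: "lp (lv x y) (a z) = lv (a x) (lp y z) + lv (a x) (rp y z)" using H' by metis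
    have e29: "lp (rv x y) (a z) = rv (a x) (lp y z)" using H' by metis
    have e30: "rv (a x) (rp y z) = rp (lv x y) (a z) + rp (rv x y) (a z)" using H' by metis
    have e31: "ld (lp x y) (a z) = lp (a x) (ld y z) + lp (a x) (rd y z)" using H' by metis
    have e32: "ld (rp x y) (a z) = rp (a x) (ld y z)" using H' by metis
    have e33: "rp (a x) (rd y z) = rd (lp x y) (a z) + rd (rp x y) (a z)" using H' by metis
    have e34: "lp (ld x y) (a z) = lp (a x) (lv y z) + lp (a x) (rv y z)" using H' by metis
    have e35: "lp (rd x y) (a z) = rp (a x) (lv y z)" using H' by metis
    have e36: "rp (a x) (rv y z) = rp (ld x y) (a z) + rp (rd x y) (a z)" using H' by metis
    note EE = e0 e1 e2 e3 e4 e5 e6 e7 e8 e9 e10 e11 e12 e13 e14 e15 e16 e17 e18 e19 e20 e21 e22 e23 e24 e25 e26 e27 e28 e29 e30 e31 e32 e33 e34 e35 e36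
    show ?thesis by (simp only: p_def v_def d_def ex EE) (simp add: ac_simps)
  qed
  have "bilin s p" "bilin s v" "bilin s d"
    using B bilin_add[OF assms(1)] unfolding p_def v_def d_def by auto
  then show ?thesis
    unfolding hom_triassociative_def p_def[symmetric] v_def[symmetric] d_def[symmetric]
    using main La by blast
qed

end
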